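(* Let $l,m\in\mathbb{N}$. If $q(x)=x^6-(l+m+3)x^4+(lm+l+m+3)x^2-1$ is irreducible over $\mathbb{Q}$, then the set of all positive eigenvalues (respectively, all negative eigenvalues) of the adjacency matrix of the double subdivided star $T_{l,m}$ is linearly independent over $\mathbb{Q}$.
   Context: A subdivided star $SK_{1,l}$ is obtained by identifying exactly one pendant (end) vertex from each of $l$ copies of the path $P_3$; the identified vertex is the coalescence vertex. The double subdivided star $T_{l,m}$ is obtained from $SK_{1,l}$ and $SK_{1,m}$ by adding one edge joining their two coalescence vertices. Its characteristic polynomial is $(x^2-1)^{l+m-2}q(x)$. *)

theory Defs
  imports "Jordan_Normal_Form.Char_Poly" "HOL-Computational_Algebra.Polynomial"
begin

text \<open>Vertices of the double subdivided star T_{l,m} are 0..<2+2l+2m: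
  0 is the coalescence vertex of SK_{1,l}, 1 that of SK_{1,m};
  for i < l the arm of SK_{1,l} is the path 0 -- (2+2i) -- (3+2i);
  for j < m the arm of SK_{1,m} is the path 1 -- (2+2l+2j) -- (3+2l+2j);
  the extra edge joins 0 and 1.\<close>

definition dss_num_vertices :: "nat \<Rightarrow> nat \<Rightarrow> nat" where
  "dss_num_vertices l m = 2 + 2 * l + 2 * m"

definition dss_arc :: "nat \<Rightarrow> nat \<Rightarrow> nat \<Rightarrow> nat \<Rightarrow> bool" where
  "dss_arc l m u v \<longleftrightarrow>
     (u = 0 \<and> v = 1)
   \<or> (\<exists>i<l. (u = 0 \<and> v = 2 + 2 * i) \<or> (u = 2 + 2 * i \<and> v = 3 + 2 * i))
   \<or> (\<exists>j<m. (u = 1 \<and> v = 2 + 2 * l + 2 * j) \<or> (u = 2 + 2 * l + 2 * j \<and> v = 3 + 2 * l + 2 * j))"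

definition dss_edge :: "nat \<Rightarrow> nat \<Rightarrow> nat \<Rightarrow> nat \<Rightarrow> bool" where
  "dss_edge l m u v \<longleftrightarrow> dss_arc l m u v \<or> dss_arc l m v u"

definition dss_adj :: "nat \<Rightarrow> nat \<Rightarrow> real mat" where
  "dss_adj l m = mat (dss_num_vertices l m) (dss_num_vertices l m)
      (\<lambda>(u, v). if dss_edge l m u v then 1 else 0)"

definition Q_lin_indep :: "real set \<Rightarrow> bool" where
  "Q_lin_indep S \<longleftrightarrow> \<not> module.dependent (\<lambda>(q::rat) (x::real). of_rat q * x) S"

end

theory Submission
  imports Defs
begin

lemma irr_no_small_root:
  fixes Q :: "rat poly" and f :: "rat poly" and x :: real
  assumes irr: "irreducible Q" and qx: "poly (map_poly of_rat Q) x = 0"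
    and fx: "poly (map_poly of_rat f) x = 0" and deg: "degree f < degree Q"
  shows "f = 0"
proof (rule ccontr)
  assume f0: "f \<noteq> 0"
  interpret h: map_poly_comm_ring_hom "of_rat :: rat \<Rightarrow> real" by unfold_locales
  define P where "P g \<longleftrightarrow> g \<noteq> 0 \<and> poly (map_poly (of_rat :: rat \<Rightarrow> real) g) x = 0" for g
  have Pf: "P f" using f0 fx unfolding P_def by simp
  define d where "d = (LEAST n. \<exists>g. P g \<and> degree g = n)"
  have "\<exists>g. P g \<and> degree g = d" unfolding d_def by (rule LeastI_ex) (use Pf in blast)
  then obtain g where Pg: "P g" and dg: "degree g = d" by blast
  have mini: "d \<le> degree h" if "P h" for h unfolding d_def by (rule Least_le) (use that in blast)
  have g0: "g \<noteq> 0" and gx: "poly (map_poly of_rat g) x = 0" using Pg unfolding P_def by auto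
  define r where "r = Q mod g"
  have "Q = Q div g * g + r" unfolding r_def by simp
  then have "map_poly (of_rat :: rat \<Rightarrow> real) Q = map_poly of_rat (Q div g) * map_poly of_rat g + map_poly of_rat r"
    by (metis h.hom_add h.hom_mult)
  then have rx: "poly (map_poly (of_rat :: rat \<Rightarrow> real) r) x = 0"
    using qx gx by (metis add_0 mult_zero_right poly_add poly_mult)
  have r0: "r = 0"
  proof (rule ccontr)
    assume "r \<noteq> 0"
    then have "P r" using rx unfolding P_def by simp
    then have "d \<le> degree r" by (rule mini)
    moreover have "degree r < degree g" using degree_mod_less[OF g0, of Q] \<open>r \<noteq> 0\<close> unfolding r_def by auto
    ultimately show False using dg by simp
  qed
  then have "g dvd Q" unfolding r_def by (simp add: mod_eq_0_iff_dvd)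
  then obtain k where k: "Q = g * k" by (elim dvdE)
  have Q0: "Q \<noteq> 0" using deg by auto
  then have k0: "k \<noteq> 0" using k by auto
  from irreducibleD[OF irr k] show False
  proof
    assume "is_unit g"
    then have "degree g = 0" using is_unit_iff_degree[OF g0] by simp
    then obtain c where c: "g = [:c:]" by (metis degree_eq_zeroE)
    then have "c \<noteq> 0" using g0 by auto
    then show False using gx c by simp
  next
    assume "is_unit k"
    then have "degree k = 0" using is_unit_iff_degree[OF k0] by simp
    then have "degree Q = degree g" using k g0 k0 by (simp add: degree_mult_eq)
    moreover have "degree g \<le> degree f" using mini[OF Pf] dg by simp
    ultimately show False using deg by simp
  qed
qed

lemma polyid:
  fixes S T x E A0 A1 A2 A3 :: real
  shows "((A0^2 + 4*E)+(A3^2 - E)) + (2*A0*A1) * x + ((A1^2 + 2*A0*A2 - E*S^2) - (A3^2 - E)*T) * x^2 + (2*A0*A3 + 2*A1*A2) * x^3 + ((A2^2 + 2*A1*A3 + 2*E*S) + (A3^2 - E)*S)*x^4 + (2*A2*A3) * x^5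
     = (A0 + A1*x + A2*x^2 + A3*x^3)^2 - E * (x^2*(S-x^2)^2 - 4) - (A3^2 - E) * (x^6 - S * x^4 + T * x^2 - 1)"
  by (simp add: algebra_simps power2_eq_square power3_eq_cube numeral_eq_Suc)

lemma core:
  fixes x1 x2 x3 :: real and a b1 b2 b3 S T :: rat
  assumes L1: "\<And>c0 c1 c2 c3 c4 c5. of_rat c0 + of_rat c1*x1 + of_rat c2*x1^2 + of_rat c3*x1^3
        + of_rat c4*x1^4 + of_rat c5*x1^5 = (0::real) \<Longrightarrow> c1=0 \<and> c3=0 \<and> c5=0"
    and q: "x1^6 - of_rat S * x1^4 + of_rat T * x1^2 - 1 = 0"
    and prod: "x1*x2*x3 = 1" and sum: "x1^2+x2^2+x3^2 = of_rat S"
    and rel: "of_rat a + of_rat b1*x1 + of_rat b2*x2 + of_rat b3*x3 = 0"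
  shows "(2*a*b1)*(b1^2 + (b2^2+b3^2)/2) = 0 \<and> (-2*b2*b3)*(b1^2 + (b2^2+b3^2)/2) + (a^2 - (b2^2+b3^2)*S/2)*(2*a*b1) = 0"
proof -
  define A0 where "A0 = -2*b2*b3"
  define A1 where "A1 = a^2 - (b2^2+b3^2)*S/2"
  define A2 where "A2 = 2*a*b1"
  define A3 where "A3 = b1^2 + (b2^2+b3^2)/2"
  define E where "E = (b2^2-b3^2)^2/4"
  let ?r = "of_rat :: rat \<Rightarrow> real"
  define ar where "ar = ?r a"
  define b1r where "b1r = ?r b1"
  define b2r where "b2r = ?r b2"
  define b3r where "b3r = ?r b3"
  define Sr where "Sr = ?r S"
  define Tr where "Tr = ?r T"
  define Ar where "Ar = -2*b2r*b3r + (ar^2 - (b2r^2+b3r^2)*Sr/2)*x1 + (2*ar*b1r)*x1^2 + (b1r^2 + (b2r^2+b3r^2)/2)*x1^3"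
  have w: "b2r*x2 + b3r*x3 = - ar - b1r*x1" using rel unfolding ar_def b1r_def b2r_def b3r_def by linarith
  have e1: "Ar = x1*((b2r*x2 + b3r*x3)^2 - (b2r^2+b3r^2)*(Sr - x1^2)/2) - 2*b2r*b3r"
    unfolding Ar_def w by (simp add: field_simps power2_eq_square power3_eq_cube)
  have e2: "x1*(b2r*x2 + b3r*x3)^2 = x1*(b2r^2*x2^2 + b3r^2*x3^2) + 2*b2r*b3r"
  proof -
    have "x1*(b2r*x2 + b3r*x3)^2 = x1*(b2r^2*x2^2 + b3r^2*x3^2) + 2*b2r*b3r*(x1*x2*x3)"
      by (simp add: algebra_simps power2_eq_square)
    then show ?thesis using prod by simp
  qed
  have Sr: "Sr - x1^2 = x2^2 + x3^2" using sum unfolding Sr_def by linarith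
  have e3: "Ar = x1*(b2r^2-b3r^2)*(x2^2-x3^2)/2"
    unfolding e1 using e2 Sr by (simp add: algebra_simps)
  have e4: "x1^2*(x2^2-x3^2)^2 = x1^2*(Sr-x1^2)^2 - 4"
  proof -
    have "x1^2*(x2^2-x3^2)^2 = x1^2*(x2^2+x3^2)^2 - 4*(x1*x2*x3)^2"
      by (simp add: algebra_simps power2_eq_square)
    then show ?thesis using prod Sr by simp
  qed
  have e5: "Ar^2 = ?r E * (x1^2*(Sr-x1^2)^2 - 4)"
  proof -
    have "Ar^2 = (b2r^2-b3r^2)^2/4 * (x1^2*(x2^2-x3^2)^2)" unfolding e3
      by (simp add: power_mult_distrib power_divide)
    then show ?thesis using e4 unfolding E_def b2r_def b3r_def
      by (simp add: of_rat_add of_rat_mult of_rat_diff of_rat_minus of_rat_power of_rat_divide)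
  qed
  have qq: "x1^6 - Sr * x1^4 + Tr * x1^2 - 1 = 0" using q unfolding Sr_def Tr_def .
  have Ar': "Ar = ?r A0 + ?r A1 * x1 + ?r A2 * x1^2 + ?r A3 * x1^3"
    unfolding Ar_def A0_def A1_def A2_def A3_def ar_def b1r_def b2r_def b3r_def Sr_def
    by (simp add: of_rat_add of_rat_mult of_rat_diff of_rat_minus of_rat_power of_rat_divide)
  let ?a0 = "?r A0" and ?a1 = "?r A1" and ?a2 = "?r A2" and ?a3 = "?r A3" and ?e = "?r E"
  have "?r ((A0^2 + 4*E)+(A3^2 - E)) + ?r (2*A0*A1) * x1 + ?r ((A1^2 + 2*A0*A2 - E*S^2) - (A3^2 - E)*T) * x1^2
     + ?r (2*A0*A3 + 2*A1*A2) * x1^3 + ?r ((A2^2 + 2*A1*A3 + 2*E*S) + (A3^2 - E)*S)*x1^4 + ?r (2*A2*A3) * x1^5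
    = ((?a0^2 + 4*?e)+(?a3^2 - ?e)) + (2*?a0*?a1) * x1 + ((?a1^2 + 2*?a0*?a2 - ?e*Sr^2) - (?a3^2 - ?e)*Tr) * x1^2 + (2*?a0*?a3 + 2*?a1*?a2) * x1^3 + ((?a2^2 + 2*?a1*?a3 + 2*?e*Sr) + (?a3^2 - ?e)*Sr)*x1^4 + (2*?a2*?a3) * x1^5"
    unfolding Sr_def Tr_def
    by (simp add: of_rat_add of_rat_mult of_rat_diff of_rat_minus of_rat_power of_rat_divide)
  also have "\<dots> = (?a0 + ?a1*x1 + ?a2*x1^2 + ?a3*x1^3)^2 - ?e * (x1^2*(Sr-x1^2)^2 - 4) - (?a3^2 - ?e) * (x1^6 - Sr * x1^4 + Tr * x1^2 - 1)"
    by (rule polyid)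
  also have "\<dots> = Ar^2 - ?r E * (x1^2*(Sr-x1^2)^2 - 4) - (?a3^2 - ?e) * (x1^6 - Sr * x1^4 + Tr * x1^2 - 1)"
    unfolding Ar' ..
  also have "\<dots> = 0" unfolding e5 qq by simp
  finally have "?r ((A0^2 + 4*E)+(A3^2 - E)) + ?r (2*A0*A1) * x1 + ?r ((A1^2 + 2*A0*A2 - E*S^2) - (A3^2 - E)*T) * x1^2
     + ?r (2*A0*A3 + 2*A1*A2) * x1^3 + ?r ((A2^2 + 2*A1*A3 + 2*E*S) + (A3^2 - E)*S)*x1^4 + ?r (2*A2*A3) * x1^5 = 0" .
  from L1[OF this] have "2*A0*A3 + 2*A1*A2 = 0" "2*A2*A3 = 0" by auto
  then have "A2*A3 = 0" "A0*A3 + A1*A2 = 0" by auto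
  then show ?thesis unfolding A0_def A1_def A2_def A3_def by blast
qed

lemma vieta3:
  fixes y1 y2 y3 s t :: real
  assumes r1: "y1^3 - s*y1^2 + t*y1 - 1 = 0" and r2: "y2^3 - s*y2^2 + t*y2 - 1 = 0"
    and r3: "y3^3 - s*y3^2 + t*y3 - 1 = 0" and d12: "y1 \<noteq> y2" and d13: "y1 \<noteq> y3" and d23: "y2 \<noteq> y3"
  shows "y1+y2+y3 = s" "y1*y2*y3 = 1" "\<And>z. z^3 - s*z^2 + t*z - 1 = (z-y1)*(z-y2)*(z-y3)"
proof -
  have "(y1-y2)*(y1^2+y1*y2+y2^2 - s*(y1+y2) + t) = 0"
    using r1 r2 by (simp add: algebra_simps power2_eq_square power3_eq_cube)
  then have q12: "y1^2+y1*y2+y2^2 - s*(y1+y2) + t = 0" using d12 by simp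
  have "(y1-y3)*(y1^2+y1*y3+y3^2 - s*(y1+y3) + t) = 0"
    using r1 r3 by (simp add: algebra_simps power2_eq_square power3_eq_cube)
  then have q13: "y1^2+y1*y3+y3^2 - s*(y1+y3) + t = 0" using d13 by simp
  have "(y2-y3)*(y1+y2+y3 - s) = 0" using q12 q13 by (simp add: algebra_simps power2_eq_square)
  then show e1: "y1+y2+y3 = s" using d23 by simp
  have e2: "y1*y2+y1*y3+y2*y3 = t" using q12 e1[symmetric] by (simp add: algebra_simps power2_eq_square)
  have "y1^3 - s*y1^2 + t*y1 - y1*y2*y3 = 0" unfolding e1[symmetric] e2[symmetric]
    by (simp add: algebra_simps power2_eq_square power3_eq_cube)
  then show e3: "y1*y2*y3 = 1" using r1 by simp
  fix z
  show "z^3 - s*z^2 + t*z - 1 = (z-y1)*(z-y2)*(z-y3)"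
    unfolding e1[symmetric] e2[symmetric] e3[symmetric]
    by (simp add: algebra_simps power2_eq_square power3_eq_cube)
qed

lemma three_roots:
  fixes L M :: real
  assumes L: "L \<ge> 1" and M: "M \<ge> 1"
  defines "P \<equiv> \<lambda>y::real. y^3 - (L+M+3)*y^2 + (L*M+L+M+3)*y - 1"
  obtains y1 y2 y3 where "0 < y1" "y1 < 1" "1 < y2" "y2 < 1+L" "1+L < y3"
    "P y1 = 0" "P y2 = 0" "P y3 = 0"
proof -
  have c: "continuous_on A P" for A unfolding P_def by (intro continuous_intros)
  have P0: "P 0 = -1" unfolding P_def by simp
  have P1: "P 1 = L*M" unfolding P_def by (simp add: algebra_simps)
  have PL: "P (1+L) = - (L^2)" unfolding P_def by (simp add: algebra_simps power2_eq_square power3_eq_cube)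
  have PS: "P (L+M+3) = (L*M+L+M+3)*(L+M+3) - 1" unfolding P_def by (simp add: algebra_simps power2_eq_square power3_eq_cube)
  have LM: "L*M \<ge> 1" using L M mult_mono[of 1 L 1 M] by simp
  obtain y1 where y1: "0 \<le> y1" "y1 \<le> 1" "P y1 = 0" using IVT'[of P 0 0 1] P0 P1 LM c by auto
  obtain y2 where y2: "1 \<le> y2" "y2 \<le> 1+L" "P y2 = 0" using IVT2'[of P "1+L" 0 1] PL P1 LM c L by auto
  have "(L*M+L+M+3)*(L+M+3) \<ge> 1" using L M LM
    using mult_mono[of 1 "L*M+L+M+3" 1 "L+M+3"] by simp
  then obtain y3 where y3: "1+L \<le> y3" "y3 \<le> L+M+3" "P y3 = 0" using IVT'[of P "1+L" 0 "L+M+3"] PL PS c L M by auto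
  have "y1 \<noteq> 0" "y1 \<noteq> 1" "y2 \<noteq> 1" "y2 \<noteq> 1+L" "y3 \<noteq> 1+L" using y1 y2 y3 P0 P1 PL LM L by auto
  then show ?thesis using that[of y1 y2 y3] y1 y2 y3 by force
qed

lemma e_b1: "i < l \<Longrightarrow> dss_edge l m (3+2*i) w \<longleftrightarrow> w = 2+2*i"
  unfolding dss_edge_def dss_arc_def by (auto; presburger)
lemma e_a1: "i < l \<Longrightarrow> dss_edge l m (2+2*i) w \<longleftrightarrow> w = 0 \<or> w = 3+2*i"
  unfolding dss_edge_def dss_arc_def by (auto; presburger)
lemma e_b2: "j < m \<Longrightarrow> dss_edge l m (3+2*l+2*j) w \<longleftrightarrow> w = 2+2*l+2*j"
  unfolding dss_edge_def dss_arc_def by (auto; presburger)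
lemma e_a2: "j < m \<Longrightarrow> dss_edge l m (2+2*l+2*j) w \<longleftrightarrow> w = 1 \<or> w = 3+2*l+2*j"
  unfolding dss_edge_def dss_arc_def by (auto; presburger)
lemma e_0: "dss_edge l m 0 w \<longleftrightarrow> w = 1 \<or> (\<exists>i<l. w = 2+2*i)"
  unfolding dss_edge_def dss_arc_def by (auto; presburger)
lemma e_1: "dss_edge l m 1 w \<longleftrightarrow> w = 0 \<or> (\<exists>j<m. w = 2+2*l+2*j)"
  unfolding dss_edge_def dss_arc_def by (auto; presburger)

lemma row_eq:
  assumes "dss_adj l m *\<^sub>v v = k \<cdot>\<^sub>v v" "v \<in> carrier_vec (dss_num_vertices l m)" "u < dss_num_vertices l m"
  shows "(\<Sum>w<dss_num_vertices l m. (if dss_edge l m u w then v$w else 0)) = k * v$u"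
proof -
  let ?n = "dss_num_vertices l m"
  have "(dss_adj l m *\<^sub>v v) $ u = (k \<cdot>\<^sub>v v) $ u" using assms(1) by simp
  moreover have "(dss_adj l m *\<^sub>v v) $ u = (\<Sum>w<?n. (if dss_edge l m u w then v$w else 0))"
    using assms(2,3) unfolding dss_adj_def
    by (auto simp: mult_mat_vec_def scalar_prod_def lessThan_atLeast0 intro!: sum.cong)
  moreover have "(k \<cdot>\<^sub>v v) $ u = k * v$u" using assms(2,3) by simp
  ultimately show ?thesis by simp
qed

lemma sum_one: "(c::nat) < n \<Longrightarrow> (\<Sum>w<n. (if w = c then f w else 0)) = (f c :: real)"
  by (simp add: sum.delta)

lemma sum_two: "(c::nat) < n \<Longrightarrow> d < n \<Longrightarrow> c \<noteq> d \<Longrightarrow>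
   (\<Sum>w<n. (if w = c \<or> w = d then f w else 0)) = (f c + f d :: real)"
proof -
  assume a: "c < n" "d < n" "c \<noteq> d"
  have "(\<Sum>w<n. (if w = c \<or> w = d then f w else 0)) = (\<Sum>w<n. (if w = c then f w else 0) + (if w = d then f w else 0))"
    using a by (intro sum.cong) auto
  also have "\<dots> = f c + f d" using a by (simp add: sum.distrib sum.delta)
  finally show ?thesis .
qed

lemma sum_star: "(c::nat) < n \<Longrightarrow> c < d \<Longrightarrow> d + 2*k \<le> n \<Longrightarrow>
   (\<Sum>w<n. (if w = c \<or> (\<exists>i<k. w = d+2*i) then f w else 0)) = (f c + (\<Sum>i<k. f (d+2*i)) :: real)"
proof -
  assume a: "c < n" "c < d" "d + 2*k \<le> n"
  let ?B = "(\<lambda>i. d+2*i) ` {..<k}"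
  have "(\<Sum>w<n. (if w = c \<or> (\<exists>i<k. w = d+2*i) then f w else 0)) = (\<Sum>w<n. (if w = c then f w else 0) + (if w \<in> ?B then f w else 0))"
    using a by (intro sum.cong) auto
  also have "\<dots> = f c + sum f ({..<n} \<inter> ?B)" using a by (simp add: sum.distrib sum.delta sum.inter_restrict)
  also have "{..<n} \<inter> ?B = ?B" using a by auto
  also have "sum f ?B = (\<Sum>i<k. f (d+2*i))" by (subst sum.reindex) (auto simp: inj_on_def)
  finally show ?thesis .
qed

lemma eig:
  assumes "eigenvalue (dss_adj l m) k" "k^2 \<noteq> 1"
  shows "k^6 - real (l+m+3) * k^4 + real (l*m+l+m+3) * k^2 - 1 = 0"
proof -
  let ?n = "dss_num_vertices l m"
  obtain v where v: "v \<in> carrier_vec ?n" "v \<noteq> 0\<^sub>v ?n" "dss_adj l m *\<^sub>v v = k \<cdot>\<^sub>v v"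
    using assms(1) unfolding eigenvalue_def eigenvector_def dss_adj_def by auto
  define f where "f w = v $ w" for w
  have n: "?n = 2 + 2*l + 2*m" by (simp add: dss_num_vertices_def)
  have R: "\<And>u. u < ?n \<Longrightarrow> (\<Sum>w<?n. (if dss_edge l m u w then f w else 0)) = k * f u"
    unfolding f_def using row_eq[OF v(3) v(1)] by blast
  define T where "T = k^2 - 1"
  have T0: "T \<noteq> 0" using assms(2) unfolding T_def by simp
  have b1: "f (2+2*i) = k * f (3+2*i)" if "i < l" for i
  proof -
    have "3+2*i < ?n" "2+2*i < ?n" using that n by auto
    then have "k * f (3+2*i) = (\<Sum>w<?n. if dss_edge l m (3+2*i) w then f w else 0)" using R by simp
    also have "\<dots> = (\<Sum>w<?n. if w = 2+2*i then f w else 0)" by (simp only: e_b1[OF that])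
    also have "\<dots> = f (2+2*i)" by (rule sum_one) fact
    finally show ?thesis by simp
  qed
  have a1: "f 0 + f (3+2*i) = k * f (2+2*i)" if "i < l" for i
  proof -
    have "3+2*i < ?n" "2+2*i < ?n" "0 < ?n" "0 \<noteq> 3+2*i" using that n by auto
    then have "k * f (2+2*i) = (\<Sum>w<?n. if dss_edge l m (2+2*i) w then f w else 0)" using R by simp
    also have "\<dots> = (\<Sum>w<?n. if w = 0 \<or> w = 3+2*i then f w else 0)" by (simp only: e_a1[OF that])
    also have "\<dots> = f 0 + f (3+2*i)" by (rule sum_two) fact+
    finally show ?thesis by simp
  qed
  have b2: "f (2+2*l+2*j) = k * f (3+2*l+2*j)" if "j < m" for j
  proof -
    have "3+2*l+2*j < ?n" "2+2*l+2*j < ?n" using that n by auto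
    then have "k * f (3+2*l+2*j) = (\<Sum>w<?n. if dss_edge l m (3+2*l+2*j) w then f w else 0)" using R by simp
    also have "\<dots> = (\<Sum>w<?n. if w = 2+2*l+2*j then f w else 0)" by (simp only: e_b2[OF that])
    also have "\<dots> = f (2+2*l+2*j)" by (rule sum_one) fact
    finally show ?thesis by simp
  qed
  have a2: "f 1 + f (3+2*l+2*j) = k * f (2+2*l+2*j)" if "j < m" for j
  proof -
    have "3+2*l+2*j < ?n" "2+2*l+2*j < ?n" "1 < ?n" "1 \<noteq> 3+2*l+2*j" using that n by auto
    then have "k * f (2+2*l+2*j) = (\<Sum>w<?n. if dss_edge l m (2+2*l+2*j) w then f w else 0)" using R by simp
    also have "\<dots> = (\<Sum>w<?n. if w = 1 \<or> w = 3+2*l+2*j then f w else 0)" by (simp only: e_a2[OF that])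
    also have "\<dots> = f 1 + f (3+2*l+2*j)" by (rule sum_two) fact+
    finally show ?thesis by simp
  qed
  have c0: "f 1 + (\<Sum>i<l. f (2+2*i)) = k * f 0"
  proof -
    have "0 < ?n" "1 < ?n" "(1::nat) < 2" "2 + 2*l \<le> ?n" using n by auto
    then have "k * f 0 = (\<Sum>w<?n. if dss_edge l m 0 w then f w else 0)" using R by simp
    also have "\<dots> = (\<Sum>w<?n. if w = 1 \<or> (\<exists>i<l. w = 2+2*i) then f w else 0)" by (simp only: e_0)
    also have "\<dots> = f 1 + (\<Sum>i<l. f (2+2*i))" by (rule sum_star) fact+
    finally show ?thesis by simp
  qed
  have c1: "f 0 + (\<Sum>j<m. f (2+2*l+2*j)) = k * f 1"
  proof -
    have "1 < ?n" "0 < ?n" "(0::nat) < 2+2*l" "2+2*l + 2*m \<le> ?n" using n by auto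
    then have "k * f 1 = (\<Sum>w<?n. if dss_edge l m 1 w then f w else 0)" using R by simp
    also have "\<dots> = (\<Sum>w<?n. if w = 0 \<or> (\<exists>j<m. w = 2+2*l+2*j) then f w else 0)" by (simp only: e_1)
    also have "\<dots> = f 0 + (\<Sum>j<m. f (2+2*l+2*j))" by (rule sum_star) fact+
    finally show ?thesis by simp
  qed
  have fb1: "f (3+2*i) = f 0 / T" if "i < l" for i
    using a1[OF that] b1[OF that] T0 unfolding T_def by (simp add: field_simps power2_eq_square)
  have fa1: "f (2+2*i) = k * f 0 / T" if "i < l" for i
    using b1[OF that] fb1[OF that] by simp
  have fb2: "f (3+2*l+2*j) = f 1 / T" if "j < m" for j
    using a2[OF that] b2[OF that] T0 unfolding T_def by (simp add: field_simps power2_eq_square)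
  have fa2: "f (2+2*l+2*j) = k * f 1 / T" if "j < m" for j
    using b2[OF that] fb2[OF that] by simp
  have s1: "f 1 + real l * (k * f 0 / T) = k * f 0"
    using c0 fa1 by simp
  have s2: "f 0 + real m * (k * f 1 / T) = k * f 1"
    using c1 fa2 by simp
  have nz: "f 0 \<noteq> 0 \<and> f 1 \<noteq> 0"
  proof (rule ccontr)
    assume "\<not> (f 0 \<noteq> 0 \<and> f 1 \<noteq> 0)"
    then have z: "f 0 = 0" "f 1 = 0" using s1 s2 by auto
    have "f u = 0" if "u < ?n" for u
    proof -
      consider "u = 0" | "u = 1" | i where "i < l" "u = 2+2*i" | i where "i < l" "u = 3+2*i"
        | j where "j < m" "u = 2+2*l+2*j" | j where "j < m" "u = 3+2*l+2*j"
      proof -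
        assume h: "u = 0 \<Longrightarrow> thesis" "u = 1 \<Longrightarrow> thesis"
          "\<And>i. i < l \<Longrightarrow> u = 2+2*i \<Longrightarrow> thesis" "\<And>i. i < l \<Longrightarrow> u = 3+2*i \<Longrightarrow> thesis"
          "\<And>j. j < m \<Longrightarrow> u = 2+2*l+2*j \<Longrightarrow> thesis" "\<And>j. j < m \<Longrightarrow> u = 3+2*l+2*j \<Longrightarrow> thesis"
        show thesis
        proof (cases "u \<le> 1")
          case True then show ?thesis using h(1,2) by linarith
        next
          case False
          define r where "r = (u - 2) div 2"
          have u: "u = 2 + 2*r \<or> u = 3 + 2*r" using False unfolding r_def by presburger
          show ?thesis
          proof (cases "r < l")
            case True then show ?thesis using u h(3,4) by blast
          next
            case False
            have "r - l < m" using \<open>u < ?n\<close> n u False by linarith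
            moreover have "u = 2+2*l+2*(r-l) \<or> u = 3+2*l+2*(r-l)" using u False by linarith
            ultimately show ?thesis using h(5,6) by blast
          qed
        qed
      qed
      then show ?thesis
        by cases (use z fa1 fb1 fa2 fb2 in auto)
    qed
    then have "v = 0\<^sub>v ?n" using v(1) unfolding f_def by (intro eq_vecI) auto
    then show False using v(2) by simp
  qed
  have e1: "f 1 * T = k * f 0 * (T - real l)" using s1 T0 by (simp add: field_simps)
  have e2: "f 0 * T = k * f 1 * (T - real m)" using s2 T0 by (simp add: field_simps)
  have "f 0 * f 1 * T^2 = f 0 * f 1 * (k^2 * (T - real l) * (T - real m))"
  proof -
    have "(f 1 * T) * (f 0 * T) = (k * f 0 * (T - real l)) * (k * f 1 * (T - real m))" using e1 e2 by simp
    then show ?thesis by (simp add: algebra_simps power2_eq_square)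
  qed
  then have "T^2 = k^2 * (T - real l) * (T - real m)" using nz by simp
  then show ?thesis unfolding T_def by (simp add: algebra_simps power2_eq_square power3_eq_cube numeral_eq_Suc)
qed

lemma sq3_zero: "(b1::rat)^2 + (b2^2+b3^2)/2 = 0 \<Longrightarrow> b1 = 0 \<and> b2 = 0 \<and> b3 = 0"
proof -
  assume h: "b1^2 + (b2^2+b3^2)/2 = 0"
  have "b1^2 \<ge> 0" "b2^2 \<ge> 0" "b3^2 \<ge> 0" by auto
  moreover have "2*b1^2 + b2^2 + b3^2 = 0" using h by (simp add: field_simps)
  ultimately have "b1^2 = 0" "b2^2 = 0" "b3^2 = 0" by linarith+
  then show ?thesis by simp
qed

lemma indep4:
  fixes x1 x2 x3 :: real and a b1 b2 b3 S T :: rat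
  assumes L: "\<And>x c0 c1 c2 c3 c4 c5. x \<in> {x1,x2,x3} \<Longrightarrow> of_rat c0 + of_rat c1*x + of_rat c2*x^2 + of_rat c3*x^3
        + of_rat c4*x^4 + of_rat c5*x^5 = (0::real) \<Longrightarrow> c1=0 \<and> c3=0 \<and> c5=0"
    and q: "\<And>x. x \<in> {x1,x2,x3} \<Longrightarrow> x^6 - of_rat S * x^4 + of_rat T * x^2 - 1 = 0"
    and pos: "x1 > 0" "x2 > 0" "x3 > 0"
    and prod: "x1*x2*x3 = 1" and sum: "x1^2+x2^2+x3^2 = of_rat S"
    and rel: "of_rat a + of_rat b1*x1 + of_rat b2*x2 + of_rat b3*x3 = 0"
  shows "a = 0 \<and> b1 = 0 \<and> b2 = 0 \<and> b3 = 0"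
proof -
  have Lx: "\<And>c0 c1 c2 c3 c4 c5. of_rat c0 + of_rat c1*x + of_rat c2*x^2 + of_rat c3*x^3
        + of_rat c4*x^4 + of_rat c5*x^5 = (0::real) \<Longrightarrow> c1=0 \<and> c3=0 \<and> c5=0" if "x \<in> {x1,x2,x3}" for x
    using L[OF that] by blast
  have C1: "(2*a*b1)*(b1^2 + (b2^2+b3^2)/2) = 0 \<and> (-2*b2*b3)*(b1^2 + (b2^2+b3^2)/2) + (a^2 - (b2^2+b3^2)*S/2)*(2*a*b1) = 0"
    by (rule core[OF Lx q prod sum rel]) auto
  have C2: "(2*a*b2)*(b2^2 + (b1^2+b3^2)/2) = 0 \<and> (-2*b1*b3)*(b2^2 + (b1^2+b3^2)/2) + (a^2 - (b1^2+b3^2)*S/2)*(2*a*b2) = 0"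
  proof (rule core[OF Lx q])
    show "x2 * x1 * x3 = 1" using prod by (simp add: algebra_simps)
    show "x2^2 + x1^2 + x3^2 = of_rat S" using sum by (simp add: algebra_simps)
    show "of_rat a + of_rat b2*x2 + of_rat b1*x1 + of_rat b3*x3 = 0" using rel by (simp add: algebra_simps)
  qed auto
  have C3: "(2*a*b3)*(b3^2 + (b1^2+b2^2)/2) = 0 \<and> (-2*b1*b2)*(b3^2 + (b1^2+b2^2)/2) + (a^2 - (b1^2+b2^2)*S/2)*(2*a*b3) = 0"
  proof (rule core[OF Lx q])
    show "x3 * x1 * x2 = 1" using prod by (simp add: algebra_simps)
    show "x3^2 + x1^2 + x2^2 = of_rat S" using sum by (simp add: algebra_simps)
    show "of_rat a + of_rat b3*x3 + of_rat b1*x1 + of_rat b2*x2 = 0" using rel by (simp add: algebra_simps)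
  qed auto
  show ?thesis
  proof (cases "b1 = 0 \<and> b2 = 0 \<and> b3 = 0")
    case True
    then show ?thesis using rel by simp
  next
    case False
    have N1: "b1^2 + (b2^2+b3^2)/2 \<noteq> 0" using sq3_zero[of b1 b2 b3] False by blast
    have N2: "b2^2 + (b1^2+b3^2)/2 \<noteq> 0" using sq3_zero[of b2 b1 b3] False by blast
    have N3: "b3^2 + (b1^2+b2^2)/2 \<noteq> 0" using sq3_zero[of b3 b1 b2] False by blast
    have ab1: "2*a*b1 = 0" using conjunct1[OF C1] N1 by simp
    have ab2: "2*a*b2 = 0" using conjunct1[OF C2] N2 by simp
    have ab3: "2*a*b3 = 0" using conjunct1[OF C3] N3 by simp
    have ab: "a*b1 = 0" "a*b2 = 0" "a*b3 = 0" using ab1 ab2 ab3 by simp_all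
    have "(-2*b2*b3)*(b1^2 + (b2^2+b3^2)/2) = 0" using conjunct2[OF C1] ab1 by simp
    then have bb1: "b2*b3 = 0" using N1 by simp
    have "(-2*b1*b3)*(b2^2 + (b1^2+b3^2)/2) = 0" using conjunct2[OF C2] ab2 by simp
    then have bb2: "b1*b3 = 0" using N2 by simp
    have "(-2*b1*b2)*(b3^2 + (b1^2+b2^2)/2) = 0" using conjunct2[OF C3] ab3 by simp
    then have bb3: "b1*b2 = 0" using N3 by simp
    have bb: "b2*b3 = 0" "b1*b3 = 0" "b1*b2 = 0" using bb1 bb2 bb3 by simp_all
    have a0: "a = 0"
    proof (rule ccontr)
      assume "a \<noteq> 0"
      then have "b1 = 0" "b2 = 0" "b3 = 0" using ab by simp_all
      with False show False by blast
    qed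
    show ?thesis
    proof (cases "b1 = 0")
      case b1: True
      show ?thesis
      proof (cases "b2 = 0")
        case True
        then have "b3 \<noteq> 0" using False b1 by auto
        then have "of_rat b3 * x3 \<noteq> 0" using pos by simp
        then show ?thesis using rel a0 b1 True by simp
      next
        case False
        then have "of_rat b2 * x2 \<noteq> 0" using pos by simp
        moreover have "b3 = 0" using bb(1) False by simp
        ultimately show ?thesis using rel a0 b1 by simp
      qed
    next
      case False
      then have "of_rat b1 * x1 \<noteq> 0" using pos by simp
      moreover have "b2 = 0" "b3 = 0" using bb(2,3) False by simp_all
      ultimately show ?thesis using rel a0 by simp
    qed
  qed
qed

theorem corollary2p6:
  fixes l m :: nat
  assumes "irreducible ([:-1, 0, of_nat (l*m + l + m + 3), 0, - of_nat (l + m + 3), 0, 1:] :: rat poly)"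
  shows "Q_lin_indep {k. eigenvalue (dss_adj l m) k \<and> k > 0}
       \<and> Q_lin_indep {k. eigenvalue (dss_adj l m) k \<and> k < 0}"
proof -
  define Q where "Q = ([:-1, 0, of_nat (l*m + l + m + 3), 0, - of_nat (l + m + 3), 0, 1:] :: rat poly)"
  have irr: "irreducible Q" using assms unfolding Q_def .
  define S :: rat where "S = of_nat (l+m+3)"
  define T :: rat where "T = of_nat (l*m+l+m+3)"
  have Sr: "(of_rat S :: real) = real l + real m + 3" unfolding S_def by (simp add: of_rat_add)
  have Tr: "(of_rat T :: real) = real l * real m + real l + real m + 3" unfolding T_def by (simp add: of_rat_add of_rat_mult)
  have degQ: "degree Q = 6" unfolding Q_def by simp
  have polyQ: "poly (map_poly of_rat Q) x = x^6 - of_rat S * x^4 + of_rat T * x^2 - 1" for x :: real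
    unfolding Q_def S_def T_def
    by (simp add: map_poly_pCons of_rat_add of_rat_minus of_rat_diff of_rat_mult algebra_simps power2_eq_square power3_eq_cube numeral_eq_Suc)
  have lm: "l \<ge> 1 \<and> m \<ge> 1"
  proof (rule ccontr)
    assume "\<not> (l \<ge> 1 \<and> m \<ge> 1)"
    then have "l = 0 \<or> m = 0" by auto
    then have "poly Q 1 = 0" unfolding Q_def by auto
    then have "[:-1, 1:] dvd Q" using poly_eq_0_iff_dvd[of Q 1] by simp
    then obtain h where h: "Q = [:-1, 1:] * h" by (elim dvdE)
    have Q0: "Q \<noteq> 0" using degQ by auto
    then have h0: "h \<noteq> 0" using h by auto
    from irreducibleD[OF irr h] have "is_unit [:-1, 1::rat:] \<or> is_unit h" .
    moreover have "\<not> is_unit [:-1, 1::rat:]" by (subst is_unit_iff_degree) auto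
    moreover have "\<not> is_unit h"
    proof
      assume "is_unit h"
      then have "degree h = 0" using is_unit_iff_degree[OF h0] by simp
      moreover have "degree Q = degree [:-1, 1::rat:] + degree h"
        unfolding h by (rule degree_mult_eq) (use h0 in auto)
      ultimately have "degree Q = 1" by simp
      then show False using degQ by simp
    qed
    ultimately show False by blast
  qed
  obtain y1 y2 y3 where y: "0 < y1" "y1 < 1" "1 < y2" "y2 < 1 + real l" "1 + real l < y3"
    and r1: "y1^3 - (real l+real m+3)*y1^2 + (real l*real m+real l+real m+3)*y1 - 1 = 0"
    and r2: "y2^3 - (real l+real m+3)*y2^2 + (real l*real m+real l+real m+3)*y2 - 1 = 0"
    and r3: "y3^3 - (real l+real m+3)*y3^2 + (real l*real m+real l+real m+3)*y3 - 1 = 0"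
    using three_roots[of "real l" "real m"] lm by auto
  have d: "y1 \<noteq> y2" "y1 \<noteq> y3" "y2 \<noteq> y3" using y by auto
  note V = vieta3[OF r1 r2 r3 d]
  define x1 where "x1 = sqrt y1"
  define x2 where "x2 = sqrt y2"
  define x3 where "x3 = sqrt y3"
  have xpos: "x1 > 0" "x2 > 0" "x3 > 0" using y unfolding x1_def x2_def x3_def by auto
  have xsq: "x1^2 = y1" "x2^2 = y2" "x3^2 = y3" using y unfolding x1_def x2_def x3_def by auto
  have prod: "x1*x2*x3 = 1" using V(2) unfolding x1_def x2_def x3_def by (simp add: real_sqrt_mult[symmetric])
  have sum: "x1^2+x2^2+x3^2 = of_rat S" using V(1) xsq Sr by simp
  have qroot: "x^6 - of_rat S * x^4 + of_rat T * x^2 - 1 = 0 \<longleftrightarrow> x^2 = y1 \<or> x^2 = y2 \<or> x^2 = y3" for x :: real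
  proof -
    have "x^6 - of_rat S * x^4 + of_rat T * x^2 - 1 = (x^2)^3 - (real l+real m+3)*(x^2)^2 + (real l*real m+real l+real m+3)*(x^2) - 1"
      unfolding Sr Tr by (simp add: power_mult[symmetric])
    also have "\<dots> = (x^2-y1)*(x^2-y2)*(x^2-y3)" by (rule V(3))
    finally show ?thesis by simp
  qed
  have qx: "x^6 - of_rat S * x^4 + of_rat T * x^2 - 1 = 0" if "x \<in> {x1,x2,x3}" for x
    using that qroot xsq by auto
  have L: "c1=0 \<and> c3=0 \<and> c5=0" if x: "x \<in> {x1,x2,x3}" and
      e: "of_rat c0 + of_rat c1*x + of_rat c2*x^2 + of_rat c3*x^3 + of_rat c4*x^4 + of_rat c5*x^5 = (0::real)"
      for x c0 c1 c2 c3 c4 c5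
  proof -
    define f where "f = [:c0, c1, c2, c3, c4, c5:]"
    have "degree f \<le> 5" unfolding f_def
      using degree_pCons_le[of c0 "[:c1, c2, c3, c4, c5:]"] degree_pCons_le[of c1 "[:c2, c3, c4, c5:]"]
        degree_pCons_le[of c2 "[:c3, c4, c5:]"] degree_pCons_le[of c3 "[:c4, c5:]"]
        degree_pCons_le[of c4 "[:c5:]"] degree_pCons_le[of c5 0]
      by simp
    then have df: "degree f < degree Q" using degQ by simp
    have "poly (map_poly of_rat f) x = of_rat c0 + x * (of_rat c1 + x * (of_rat c2 + x * (of_rat c3 + x * (of_rat c4 + x * of_rat c5))))"
      unfolding f_def by (simp add: Polynomial.map_poly_pCons)
    also have "\<dots> = of_rat c0 + of_rat c1*x + of_rat c2*x^2 + of_rat c3*x^3 + of_rat c4*x^4 + of_rat c5*x^5"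
      by (simp add: algebra_simps power2_eq_square power3_eq_cube numeral_eq_Suc)
    finally have pf: "poly (map_poly of_rat f) x = 0" using e by simp
    have "poly (map_poly of_rat Q) x = 0" using polyQ qx[OF x] by simp
    from irr_no_small_root[OF irr this pf df] have "f = 0" .
    then show ?thesis unfolding f_def by simp
  qed
  have IND: "a = 0 \<and> b1 = 0 \<and> b2 = 0 \<and> b3 = 0"
    if "of_rat a + of_rat b1*x1 + of_rat b2*x2 + of_rat b3*x3 = 0" for a b1 b2 b3
  proof (rule indep4[of x1 x2 x3 S T])
    show "of_rat a + of_rat b1*x1 + of_rat b2*x2 + of_rat b3*x3 = 0" by (rule that)
    show "x1*x2*x3 = 1" by (rule prod)
    show "x1^2+x2^2+x3^2 = of_rat S" by (rule sum)
    show "x1 > 0" "x2 > 0" "x3 > 0" by (rule xpos)+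
    show "x^6 - of_rat S * x^4 + of_rat T * x^2 - 1 = 0" if "x \<in> {x1,x2,x3}" for x using that by (rule qx)
    show "c1=0 \<and> c3=0 \<and> c5=0" if "x \<in> {x1,x2,x3}"
      "of_rat c0 + of_rat c1*x + of_rat c2*x^2 + of_rat c3*x^3 + of_rat c4*x^4 + of_rat c5*x^5 = (0::real)"
      for x c0 c1 c2 c3 c4 c5 using that by (rule L)
  qed
  have ysq: "x = x1 \<or> x = x2 \<or> x = x3" if "x > 0" "x^2 = y1 \<or> x^2 = y2 \<or> x^2 = y3" for x :: real
  proof -
    have "x = sqrt (x^2)" using that(1) by simp
    then show ?thesis using that(2) unfolding x1_def x2_def x3_def by auto
  qed
  have Eq: "x^6 - of_rat S * x^4 + of_rat T * x^2 - 1 = 0" if "eigenvalue (dss_adj l m) x" "x^2 \<noteq> 1" for x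
    using eig[OF that] unfolding Sr Tr by simp
  have pos_sub: "{k. eigenvalue (dss_adj l m) k \<and> k > 0} \<subseteq> {1, x1, x2, x3}"
  proof
    fix k assume "k \<in> {k. eigenvalue (dss_adj l m) k \<and> k > 0}"
    then have k: "eigenvalue (dss_adj l m) k" "k > 0" by auto
    show "k \<in> {1, x1, x2, x3}"
    proof (cases "k^2 = 1")
      case True then have "k = 1" using k(2) power2_eq_1_iff[of k] by auto
      then show ?thesis by simp
    next
      case False
      from Eq[OF k(1) False] have "k^2 = y1 \<or> k^2 = y2 \<or> k^2 = y3" using qroot by simp
      then show ?thesis using ysq[OF k(2)] by auto
    qed
  qed
  have neg_sub: "{k. eigenvalue (dss_adj l m) k \<and> k < 0} \<subseteq> {-1, -x1, -x2, -x3}"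
  proof
    fix k assume "k \<in> {k. eigenvalue (dss_adj l m) k \<and> k < 0}"
    then have k: "eigenvalue (dss_adj l m) k" "k < 0" by auto
    show "k \<in> {-1, -x1, -x2, -x3}"
    proof (cases "k^2 = 1")
      case True then have "k = -1" using k(2) power2_eq_1_iff[of k] by auto
      then show ?thesis by simp
    next
      case False
      from Eq[OF k(1) False] have "k^2 = y1 \<or> k^2 = y2 \<or> k^2 = y3" using qroot by simp
      then have "(-k)^2 = y1 \<or> (-k)^2 = y2 \<or> (-k)^2 = y3" by simp
      then have "-k = x1 \<or> -k = x2 \<or> -k = x3" using ysq[of "-k"] k(2) by auto
      then show ?thesis by auto
    qed
  qed
  interpret M: Modules.module "\<lambda>(q::rat) (x::real). of_rat q * x"
    by unfold_locales (simp_all add: algebra_simps of_rat_add of_rat_mult)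
  have dx: "x1 \<noteq> x2" "x1 \<noteq> x3" "x2 \<noteq> x3" "x1 \<noteq> 1" "x2 \<noteq> 1" "x3 \<noteq> 1"
  proof -
    have "y1 \<noteq> y2" "y1 \<noteq> y3" "y2 \<noteq> y3" "y1 \<noteq> 1" "y2 \<noteq> 1" "y3 \<noteq> 1" using y by auto
    then show "x1 \<noteq> x2" "x1 \<noteq> x3" "x2 \<noteq> x3" "x1 \<noteq> 1" "x2 \<noteq> 1" "x3 \<noteq> 1"
      unfolding x1_def x2_def x3_def by auto
  qed
  have indP: "\<not> M.dependent {1, x1, x2, x3}"
  proof
    assume "M.dependent {1, x1, x2, x3}"
    then obtain u where u: "\<exists>v\<in>{1, x1, x2, x3}. u v \<noteq> 0"
      and s: "(\<Sum>v\<in>{1, x1, x2, x3}. of_rat (u v) * v) = 0"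
      using M.dependent_finite[of "{1, x1, x2, x3}"] by auto
    have "of_rat (u 1) + of_rat (u x1) * x1 + of_rat (u x2) * x2 + of_rat (u x3) * x3 = 0"
      using s dx by (simp add: algebra_simps)
    from IND[OF this] u show False by auto
  qed
  have indN: "\<not> M.dependent {-1, -x1, -x2, -x3}"
  proof
    assume "M.dependent {-1, -x1, -x2, -x3}"
    then obtain u where u: "\<exists>v\<in>{-1, -x1, -x2, -x3}. u v \<noteq> 0"
      and s: "(\<Sum>v\<in>{-1, -x1, -x2, -x3}. of_rat (u v) * v) = 0"
      using M.dependent_finite[of "{-1, -x1, -x2, -x3}"] by auto
    have "- (of_rat (u (-1)) + of_rat (u (-x1)) * x1 + of_rat (u (-x2)) * x2 + of_rat (u (-x3)) * x3) = 0"
      using s dx by (simp add: algebra_simps)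
    then have "of_rat (u (-1)) + of_rat (u (-x1)) * x1 + of_rat (u (-x2)) * x2 + of_rat (u (-x3)) * x3 = 0"
      by linarith
    from IND[OF this] u show False by auto
  qed
  have A: "\<not> M.dependent {k. eigenvalue (dss_adj l m) k \<and> k > 0}"
  proof
    assume "M.dependent {k. eigenvalue (dss_adj l m) k \<and> k > 0}"
    then have "M.dependent {1, x1, x2, x3}" by (rule M.dependent_mono) (rule pos_sub)
    with indP show False ..
  qed
  have B: "\<not> M.dependent {k. eigenvalue (dss_adj l m) k \<and> k < 0}"
  proof
    assume "M.dependent {k. eigenvalue (dss_adj l m) k \<and> k < 0}"
    then have "M.dependent {-1, -x1, -x2, -x3}" by (rule M.dependent_mono) (rule neg_sub)
    with indN show False ..
  qed
  show ?thesis unfolding Q_lin_indep_def using A B by blast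
qed


end
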